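(* Let $f:\mathbb{R}^n\to\mathbb{R}$ be a continuous, $L$-smooth loss function with global minimum $w^*$, and let $E(w):=f(w)-f(w^* )$. Let $w_i$ and $w_{i+1}$ be two subsequent points of a sequence generated by the Loss-Guarded L2O algorithm using deterministic gradient descent with step size $\alpha/L$ (for some $\alpha>0$) as the guarding mechanism. Then $$E(w_{i+1})-E(w_i)\le -\frac{\alpha}{L}\Big(1-\frac{\alpha}{2}\Big)\|\nabla f(w_i)\|_2^2$$ and $$E(w_i)\ge \frac{\alpha}{L}\Big(1-\frac{\alpha}{2}\Big)\|\nabla f(w_i)\|_2^2.$$
   Context: Loss-Guarded L2O algorithm with deterministic gradient descent: at each step $i$, an arbitrary black-box rule proposes a point $y_i$, the fallback proposes $z_i=w_i-\frac{\alpha}{L}\nabla f(w_i)$, and $w_{i+1}=y_i$ if $f(y_i)<f(z_i)$, otherwise $w_{i+1}=z_i$. $f$ is $L$-smooth means $f(y)\le f(x)+\langle\nabla f(x),y-x\rangle+\frac{L}{2}\|y-x\|_2^2$ for all $x,y$. *)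

theory Defs
  imports "HOL-Analysis.Analysis"
begin

definition is_gradient :: "(real^'n \<Rightarrow> real) \<Rightarrow> (real^'n \<Rightarrow> real^'n) \<Rightarrow> bool" where
  "is_gradient f grad \<longleftrightarrow> (\<forall>x. (f has_derivative (\<lambda>h. grad x \<bullet> h)) (at x))"

text \<open>L-smoothness in the sense of the paper (descent-lemma form).\<close>
definition L_smooth :: "real \<Rightarrow> (real^'n \<Rightarrow> real) \<Rightarrow> (real^'n \<Rightarrow> real^'n) \<Rightarrow> bool" where
  "L_smooth L f grad \<longleftrightarrow>
     (\<forall>x y. f y \<le> f x + grad x \<bullet> (y - x) + L / 2 * (norm (y - x))\<^sup>2)"

definition lg_l2o_step :: "(real^'n \<Rightarrow> real) \<Rightarrow> (real^'n \<Rightarrow> real^'n) \<Rightarrow> real \<Rightarrow> real \<Rightarrow> real^'n \<Rightarrow> real^'n \<Rightarrow> real^'n" where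
  "lg_l2o_step f grad \<alpha> L w y =
     (let z = w - (\<alpha> / L) *\<^sub>R grad w in if f y < f z then y else z)"

end

theory Submission
  imports Defs
begin

theorem proposition1:
  fixes f :: "real^'n \<Rightarrow> real" and grad :: "real^'n \<Rightarrow> real^'n"
    and L \<alpha> :: real and wstar :: "real^'n"
    and w y :: "nat \<Rightarrow> real^'n" and i :: nat
  assumes "continuous_on UNIV f"
    and "is_gradient f grad"
    and "L > 0"
    and "L_smooth L f grad"
    and "\<forall>v. f wstar \<le> f v"
    and "\<alpha> > 0"
    and "\<forall>k. w (Suc k) = lg_l2o_step f grad \<alpha> L (w k) (y k)"
  shows "(f (w (Suc i)) - f wstar) - (f (w i) - f wstar)
           \<le> - (\<alpha> / L) * (1 - \<alpha> / 2) * (norm (grad (w i)))\<^sup>2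
         \<and> f (w i) - f wstar \<ge> (\<alpha> / L) * (1 - \<alpha> / 2) * (norm (grad (w i)))\<^sup>2"
proof -
  let ?g = "grad (w i)"
  define z where "z = w i - (\<alpha> / L) *\<^sub>R ?g"
  have step: "w (Suc i) = (if f (y i) < f z then y i else z)"
    using assms(7) unfolding lg_l2o_step_def z_def by (simp add: Let_def)
  have le1: "f (w (Suc i)) \<le> f z" using step by (auto split: if_splits)
  have ip: "?g \<bullet> (z - w i) = - (\<alpha> / L) * (norm ?g)\<^sup>2"
    unfolding z_def by (simp add: power2_norm_eq_inner)
  have nr: "(norm (z - w i))\<^sup>2 = (\<alpha> / L)\<^sup>2 * (norm ?g)\<^sup>2"
    unfolding z_def by (simp add: power_mult_distrib power_divide)
  have "f z \<le> f (w i) + ?g \<bullet> (z - w i) + L / 2 * (norm (z - w i))\<^sup>2"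
    using assms(4) unfolding L_smooth_def by blast
  also have "\<dots> = f (w i) - (\<alpha> / L) * (1 - \<alpha> / 2) * (norm ?g)\<^sup>2"
    unfolding ip nr using assms(3) by (simp add: power2_eq_square field_simps)
  finally have fz: "f z \<le> f (w i) - (\<alpha> / L) * (1 - \<alpha> / 2) * (norm ?g)\<^sup>2" .
  have "f wstar \<le> f z" using assms(5) by blast
  then show ?thesis using fz le1 by linarith
qed

end
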